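(* If $\mathcal{O}$ is a strongly decomposable set of upwards closed modalities, then $\mathcal{O}$ is decomposable.
   Context: $\Sigma$ is a signature of effect operations with arities $\alpha^n\to\alpha$, $\mathbf{N}\times\alpha^n\to\alpha$, $\alpha^{\mathbf{N}}\to\alpha$ or $\mathbf{N}\times\alpha^{\mathbf{N}}\to\alpha$. $TX$ is the set of possibly infinite labelled trees with leaves $\bot$ or elements of $X$ and internal nodes labelled by operations (or $\sigma_m$, $m\in\mathbb{N}$) with children according to arity; $t\le t'$ iff $t$ is obtained from $t'$ by replacing subtrees with $\bot$. $\mu:TTX\to TX$ replaces each leaf of a tree of trees by that tree. $\mathbf{1}=\{*\}$. A set $\mathcal{O}$ of modalities is given with $[\![o]\!]\subseteq T\mathbf{1}$; upwards closed means $[\![o]\!]$ is upward closed under $\le$. $t[\in P]\in T\mathbf{1}$ replaces leaves in $P$ by $*$ and other $X$-leaves by $\bot$; $o(A)=\{t\in TX\mid t[\in A]\in[\![o]\!]\}$. $\mathcal{T}$ is the least class of formulas containing $o(\top),o(\bot)$ ($o\in\mathcal{O}$) closed under arbitrary $\bigvee,\bigwedge$, with $[\![o(\top)]\!]=o(\{*\})$, $[\![o(\bot)]\!]=o(\emptyset)$, unions/intersections. $t\trianglelefteq t'$ iff $\forall\Phi\in\mathcal{T}$, $t\in[\![\Phi]\!]\Rightarrow t'\in[\![\Phi]\!]$; for $r,r'\in TT\mathbf{1}$, $r\preccurlyeq r'$ iff $\forall o\,\forall\Phi\in\mathcal{T}$, $r\in o([\![\Phi]\!])\Rightarrow r'\in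 o([\![\Phi]\!])$. $\mathcal{O}$ is decomposable if $r\preccurlyeq r'$ implies $\mu r\trianglelefteq\mu r'$. $\mathcal{O}$ is strongly decomposable if for every $r\in TT\mathbf{1}$ and $o\in\mathcal{O}$ with $\mu r\in o(\{*\})$ there is a collection $\{(o_i,o_i')\}_{i\in I}$ of pairs of modalities in $\mathcal{O}$ such that (1) $r\in o_i(o_i'(\{*\}))$ for all $i\in I$, and (2) for every $r'\in TT\mathbf{1}$, if $r'\in o_i(o_i'(\{*\}))$ for all $i\in I$ then $\mu r'\in o(\{*\})$. *)

theory Defs
  imports "HOL-Library.BNF_Corec" "HOL-Library.Extended_Nat"
begin

text \<open>Node labels are of an abstract type 'l (operations of
the signature, together with their natural-number parameter if any, and the
labels sigma_m); each label l has arity ar l :: enat (finite n, or infinity for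
countably many children).  Children of a node are indexed by nat; in a
well-formed tree the children at indices >= ar l are Bot (padding).\<close>

codatatype ('l, 'x) tree = Bot | Leaf 'x | Node 'l "nat \<Rightarrow> ('l, 'x) tree"

text \<open>Well-formed trees with leaves in X: this is the set TX (for the carrier X).\<close>
coinductive wft :: "('l \<Rightarrow> enat) \<Rightarrow> 'x set \<Rightarrow> ('l, 'x) tree \<Rightarrow> bool"
  for ar :: "'l \<Rightarrow> enat" and X :: "'x set" where
  wft_Bot: "wft ar X Bot"
| wft_Leaf: "x \<in> X \<Longrightarrow> wft ar X (Leaf x)"
| wft_Node: "(\<forall>i. (enat i < ar l \<longrightarrow> wft ar X (f i)) \<and> (ar l \<le> enat i \<longrightarrow> f i = Bot))
      \<Longrightarrow> wft ar X (Node l f)"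

definition T1 :: "('l \<Rightarrow> enat) \<Rightarrow> ('l, unit) tree set" where
  "T1 ar = {t. wft ar UNIV t}"

coinductive tree_le :: "('l, 'x) tree \<Rightarrow> ('l, 'x) tree \<Rightarrow> bool" where
  le_Bot: "tree_le Bot t"
| le_Leaf: "tree_le (Leaf x) (Leaf x)"
| le_Node: "(\<forall>i. tree_le (f i) (g i)) \<Longrightarrow> tree_le (Node l f) (Node l g)"

corec mu :: "('l, ('l, 'x) tree) tree \<Rightarrow> ('l, 'x) tree" where
  "mu r = (case r of Bot \<Rightarrow> Bot | Leaf t \<Rightarrow> t | Node l f \<Rightarrow> Node l (\<lambda>i. mu (f i)))"

primcorec restr :: "'x set \<Rightarrow> ('l, 'x) tree \<Rightarrow> ('l, unit) tree" where
  "restr P t = (case t of Bot \<Rightarrow> Bot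
                 | Leaf x \<Rightarrow> (if x \<in> P then Leaf () else Bot)
                 | Node l f \<Rightarrow> Node l (\<lambda>i. restr P (f i)))"

definition mod_set :: "('l \<Rightarrow> enat) \<Rightarrow> ('m \<Rightarrow> ('l, unit) tree set) \<Rightarrow> 'x set \<Rightarrow> 'm
    \<Rightarrow> 'x set \<Rightarrow> ('l, 'x) tree set" where
  "mod_set ar sem X om A = {t. wft ar X t \<and> restr A t \<in> sem om}"

text \<open>Denotations [[\<Phi>]] of the formulas \<Phi> of the logic \<T> (least class containing o(top), o(bot)
closed under arbitrary disjunctions and conjunctions); conjunctions are interpreted
inside T1 (so the empty conjunction denotes T1).\<close>
inductive_set formula_den :: "('l \<Rightarrow> enat) \<Rightarrow> ('m \<Rightarrow> ('l, unit) tree set)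
    \<Rightarrow> ('l, unit) tree set set"
  for ar :: "'l \<Rightarrow> enat" and sem :: "'m \<Rightarrow> ('l, unit) tree set" where
  fd_top: "mod_set ar sem UNIV om {()} \<in> formula_den ar sem"
| fd_bot: "mod_set ar sem UNIV om {} \<in> formula_den ar sem"
| fd_Sup: "\<forall>D \<in> S. D \<in> formula_den ar sem \<Longrightarrow> \<Union>S \<in> formula_den ar sem"
| fd_Inf: "\<forall>D \<in> S. D \<in> formula_den ar sem \<Longrightarrow> T1 ar \<inter> \<Inter>S \<in> formula_den ar sem"

definition formula_pre :: "('l \<Rightarrow> enat) \<Rightarrow> ('m \<Rightarrow> ('l, unit) tree set)
    \<Rightarrow> ('l, unit) tree \<Rightarrow> ('l, unit) tree \<Rightarrow> bool" where
  "formula_pre ar sem t t' \<longleftrightarrow> (\<forall>D \<in> formula_den ar sem. t \<in> D \<longrightarrow> t' \<in> D)"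

definition tt_pre :: "('l \<Rightarrow> enat) \<Rightarrow> ('m \<Rightarrow> ('l, unit) tree set)
    \<Rightarrow> ('l, ('l, unit) tree) tree \<Rightarrow> ('l, ('l, unit) tree) tree \<Rightarrow> bool" where
  "tt_pre ar sem r r' \<longleftrightarrow> (\<forall>om. \<forall>D \<in> formula_den ar sem.
      r \<in> mod_set ar sem (T1 ar) om D \<longrightarrow> r' \<in> mod_set ar sem (T1 ar) om D)"

definition upwards_closed :: "('l \<Rightarrow> enat) \<Rightarrow> ('m \<Rightarrow> ('l, unit) tree set) \<Rightarrow> bool" where
  "upwards_closed ar sem \<longleftrightarrow>
     (\<forall>om t t'. t \<in> sem om \<longrightarrow> tree_le t t' \<longrightarrow> t' \<in> T1 ar \<longrightarrow> t' \<in> sem om)"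

definition decomposable :: "('l \<Rightarrow> enat) \<Rightarrow> ('m \<Rightarrow> ('l, unit) tree set) \<Rightarrow> bool" where
  "decomposable ar sem \<longleftrightarrow>
     (\<forall>r r'. wft ar (T1 ar) r \<longrightarrow> wft ar (T1 ar) r' \<longrightarrow> tt_pre ar sem r r'
        \<longrightarrow> formula_pre ar sem (mu r) (mu r'))"

definition strongly_decomposable :: "('l \<Rightarrow> enat) \<Rightarrow> ('m \<Rightarrow> ('l, unit) tree set) \<Rightarrow> bool" where
  "strongly_decomposable ar sem \<longleftrightarrow>
     (\<forall>r om. wft ar (T1 ar) r \<longrightarrow> mu r \<in> mod_set ar sem UNIV om {()} \<longrightarrow>
        (\<exists>C :: ('m \<times> 'm) set.
           (\<forall>(oi, oi') \<in> C. r \<in> mod_set ar sem (T1 ar) oi (mod_set ar sem UNIV oi' {()})) \<and>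
           (\<forall>r'. wft ar (T1 ar) r' \<longrightarrow>
              (\<forall>(oi, oi') \<in> C. r' \<in> mod_set ar sem (T1 ar) oi (mod_set ar sem UNIV oi' {()}))
              \<longrightarrow> mu r' \<in> mod_set ar sem UNIV om {()})))"

end

theory Submission
  imports Defs
begin

lemma tree_eq_coinduct:
  assumes "R x y"
    and step: "\<And>x y. R x y \<Longrightarrow> x = y \<or> (x = Bot \<and> y = Bot) \<or> (\<exists>a. x = Leaf a \<and> y = Leaf a)
       \<or> (\<exists>l f g. x = Node l f \<and> y = Node l g \<and> (\<forall>i. R (f i) (g i)))"
  shows "x = y"
proof (rule tree.coinduct[where R="\<lambda>x y. R x y \<or> x = y"])
  show "R x y \<or> x = y" using assms(1) by simp
next
  fix t t' :: "('a,'b) tree"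
  assume "R t t' \<or> t = t'"
  then consider "t = t'" | "t = Bot \<and> t' = Bot" | "\<exists>a. t = Leaf a \<and> t' = Leaf a"
      | "\<exists>l f g. t = Node l f \<and> t' = Node l g \<and> (\<forall>i. R (f i) (g i))"
      using step by blast
  then show "(t = Bot) = (t' = Bot) \<and>
      is_Leaf t = is_Leaf t' \<and>
      (is_Leaf t \<longrightarrow> is_Leaf t' \<longrightarrow> un_Leaf t = un_Leaf t') \<and>
      (is_Node t \<longrightarrow>
       is_Node t' \<longrightarrow>
       un_Node1 t = un_Node1 t' \<and>
       rel_fun (=) (\<lambda>x y. R x y \<or> x = y) (un_Node2 t) (un_Node2 t'))"
  proof cases
    case 1 then show ?thesis by (cases t) (auto simp: rel_fun_def)
  next
    case 2 then show ?thesis by auto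
  next
    case 3 then show ?thesis by auto
  next
    case 4 then show ?thesis by (auto simp: rel_fun_def)
  qed
qed

lemma restr_simps[simp]:
  "restr P Bot = Bot"
  "restr P (Leaf x) = (if x \<in> P then Leaf () else Bot)"
  "restr P (Node l f) = Node l (\<lambda>i. restr P (f i))"
  by (subst restr.code; simp)+

lemma mu_simps[simp]:
  "mu Bot = Bot"
  "mu (Leaf t) = t"
  "mu (Node l f) = Node l (\<lambda>i. mu (f i))"
  by (subst mu.code; simp)+

lemma mu_wft:
  assumes "wft ar (T1 ar) r" shows "wft ar UNIV (mu r)"
proof (rule wft.coinduct[where Xa="\<lambda>x. \<exists>r. x = mu r \<and> wft ar (T1 ar) r"])
  show "\<exists>r0. mu r = mu r0 \<and> wft ar (T1 ar) r0" using assms by blast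
next
  fix x :: "('a,unit) tree"
  assume "\<exists>r. x = mu r \<and> wft ar (T1 ar) r"
  then obtain r0 where x: "x = mu r0" and w: "wft ar (T1 ar) r0" by blast
  from w show "x = Bot \<or>
       (\<exists>xa. x = Leaf xa \<and> xa \<in> UNIV) \<or>
       (\<exists>l f. x = Node l f \<and>
              (\<forall>i. (enat i < ar l \<longrightarrow> (\<exists>r. f i = mu r \<and> wft ar (T1 ar) r) \<or> wft ar UNIV (f i)) \<and>
                   (ar l \<le> enat i \<longrightarrow> f i = Bot)))"
  proof cases
    case wft_Bot then show ?thesis using x by simp
  next
    case (wft_Leaf t) then show ?thesis using x
      by (cases "mu r0") (auto simp: T1_def elim: wft.cases)
  next
    case (wft_Node l f) then show ?thesis using x by auto
  qed
qed

lemma restr_wft: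
  assumes "wft ar X t" shows "wft ar UNIV (restr P t)"
proof (rule wft.coinduct[where Xa="\<lambda>x. \<exists>t. x = restr P t \<and> wft ar X t"])
  show "\<exists>t0. restr P t = restr P t0 \<and> wft ar X t0" using assms by blast
next
  fix x :: "('a,unit) tree"
  assume "\<exists>t. x = restr P t \<and> wft ar X t"
  then obtain r0 where x: "x = restr P r0" and w: "wft ar X r0" by blast
  from w show "x = Bot \<or>
       (\<exists>xa. x = Leaf xa \<and> xa \<in> UNIV) \<or>
       (\<exists>l f. x = Node l f \<and>
              (\<forall>i. (enat i < ar l \<longrightarrow> (\<exists>t. f i = restr P t \<and> wft ar X t) \<or> wft ar UNIV (f i)) \<and>
                   (ar l \<le> enat i \<longrightarrow> f i = Bot)))"
  proof cases
    case wft_Bot then show ?thesis using x by simp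
  next
    case (wft_Leaf t) then show ?thesis using x by auto
  next
    case (wft_Node l f) then show ?thesis using x by auto
  qed
qed

lemma map_wft:
  assumes "wft ar X r" "\<forall>x\<in>X. g x \<in> Y" shows "wft ar Y (map_tree id g r)"
proof (rule wft.coinduct[where Xa="\<lambda>x. \<exists>t. x = map_tree id g t \<and> wft ar X t"])
  show "\<exists>t0. map_tree id g r = map_tree id g t0 \<and> wft ar X t0" using assms by blast
next
  fix x
  assume "\<exists>t. x = map_tree id g t \<and> wft ar X t"
  then obtain r0 where x: "x = map_tree id g r0" and w: "wft ar X r0" by blast
  from w show "x = Bot \<or>
       (\<exists>xa. x = Leaf xa \<and> xa \<in> Y) \<or>
       (\<exists>l f. x = Node l f \<and>
              (\<forall>i. (enat i < ar l \<longrightarrow> (\<exists>t. f i = map_tree id g t \<and> wft ar X t) \<or> wft ar Y (f i)) \<and>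
                   (ar l \<le> enat i \<longrightarrow> f i = Bot)))"
  proof cases
    case wft_Bot then show ?thesis using x by simp
  next
    case (wft_Leaf t) then show ?thesis using x assms(2) by auto
  next
    case (wft_Node l f) then show ?thesis using x by auto
  qed
qed

lemma restr_restr_empty: "restr A (restr {} (t :: ('l,'x) tree)) = restr {} t"
proof (rule tree_eq_coinduct[where R="\<lambda>x y. \<exists>t :: ('l,'x) tree. x = restr A (restr {} t) \<and> y = restr {} t"])
  show "\<exists>t0 :: ('l,'x) tree. restr A (restr {} t) = restr A (restr {} t0) \<and> restr {} t = restr {} t0" by blast
next
  fix x y
  assume "\<exists>t :: ('l,'x) tree. x = restr A (restr {} t) \<and> y = restr {} t"
  then obtain t0 :: "('l,'x) tree" where "x = restr A (restr {} t0)" "y = restr {} t0" by blast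
  then show "x = y \<or> (x = Bot \<and> y = Bot) \<or> (\<exists>a. x = Leaf a \<and> y = Leaf a)
       \<or> (\<exists>l f g. x = Node l f \<and> y = Node l g \<and> (\<forall>i. \<exists>t :: ('l,'x) tree. f i = restr A (restr {} t) \<and> g i = restr {} t))"
    by (cases t0) auto
qed

lemma mu_map: "mu (map_tree id (restr {}) r) = restr {} (mu (r :: ('l, ('l,'x) tree) tree))"
proof (rule tree_eq_coinduct[where R="\<lambda>x y. \<exists>r :: ('l, ('l,'x) tree) tree. x = mu (map_tree id (restr {}) r) \<and> y = restr {} (mu r)"])
  fix x y
  assume "\<exists>r :: ('l, ('l,'x) tree) tree. x = mu (map_tree id (restr {}) r) \<and> y = restr {} (mu r)"
  then obtain t0 :: "('l, ('l,'x) tree) tree" where "x = mu (map_tree id (restr {}) t0)" "y = restr {} (mu t0)" by blast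
  then show "x = y \<or> (x = Bot \<and> y = Bot) \<or> (\<exists>a. x = Leaf a \<and> y = Leaf a)
       \<or> (\<exists>l f g. x = Node l f \<and> y = Node l g \<and> (\<forall>i. \<exists>r :: ('l, ('l,'x) tree) tree. f i = mu (map_tree id (restr {}) r) \<and> g i = restr {} (mu r)))"
    by (cases t0) auto
qed blast

lemma restr_map: "restr A (map_tree id g r) = restr (g -` A) r"
proof (rule tree_eq_coinduct[where R="\<lambda>x y. \<exists>r. x = restr A (map_tree id g r) \<and> y = restr (g -` A) r"])
  fix x y
  assume "\<exists>r. x = restr A (map_tree id g r) \<and> y = restr (g -` A) r"
  then obtain t0 where "x = restr A (map_tree id g t0)" "y = restr (g -` A) t0" by blast
  then show "x = y \<or> (x = Bot \<and> y = Bot) \<or> (\<exists>a. x = Leaf a \<and> y = Leaf a)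
       \<or> (\<exists>l f ga. x = Node l f \<and> y = Node l ga \<and> (\<forall>i. \<exists>r. f i = restr A (map_tree id g r) \<and> ga i = restr (g -` A) r))"
    by (cases t0) auto
qed blast

lemma restr_cong:
  assumes "wft ar X r" "A \<inter> X = B \<inter> X" shows "restr A r = restr B r"
proof (rule tree_eq_coinduct[where R="\<lambda>x y. \<exists>r. x = restr A r \<and> y = restr B r \<and> wft ar X r"])
  show "\<exists>r0. restr A r = restr A r0 \<and> restr B r = restr B r0 \<and> wft ar X r0" using assms by blast
next
  fix x y
  assume "\<exists>r. x = restr A r \<and> y = restr B r \<and> wft ar X r"
  then obtain t0 where xy: "x = restr A t0" "y = restr B t0" and w: "wft ar X t0" by blast
  from w show "x = y \<or> (x = Bot \<and> y = Bot) \<or> (\<exists>a. x = Leaf a \<and> y = Leaf a)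
       \<or> (\<exists>l f g. x = Node l f \<and> y = Node l g \<and> (\<forall>i. \<exists>r. f i = restr A r \<and> g i = restr B r \<and> wft ar X r))"
  proof cases
    case wft_Bot then show ?thesis using xy by simp
  next
    case (wft_Leaf a) then show ?thesis using xy assms(2) by auto
  next
    case (wft_Node l f)
    have "\<forall>i. wft ar X (f i)" using wft_Node(2) by (metis not_le wft_Bot)
    then show ?thesis using xy wft_Node(1) by auto
  qed
qed


theorem proposition4p19:
  fixes ar :: "'l \<Rightarrow> enat" and sem :: "'m \<Rightarrow> ('l, unit) tree set"
  assumes "\<forall>om. sem om \<subseteq> T1 ar"
    and "upwards_closed ar sem"
    and "strongly_decomposable ar sem"
  shows "decomposable ar sem"
  unfolding decomposable_def formula_pre_def
proof (intro allI impI ballI)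
  fix r r' D
  assume wr: "wft ar (T1 ar) r" and wr': "wft ar (T1 ar) r'" and tp: "tt_pre ar sem r r'"
    and D: "D \<in> formula_den ar sem" and muD: "mu r \<in> D"
  have SD: "\<And>r om. wft ar (T1 ar) r \<Longrightarrow> mu r \<in> mod_set ar sem UNIV om {()} \<Longrightarrow>
        (\<exists>C :: ('m \<times> 'm) set.
           (\<forall>(oi, oi') \<in> C. r \<in> mod_set ar sem (T1 ar) oi (mod_set ar sem UNIV oi' {()})) \<and>
           (\<forall>r'. wft ar (T1 ar) r' \<longrightarrow>
              (\<forall>(oi, oi') \<in> C. r' \<in> mod_set ar sem (T1 ar) oi (mod_set ar sem UNIV oi' {()}))
              \<longrightarrow> mu r' \<in> mod_set ar sem UNIV om {()}))"
    using assms(3) unfolding strongly_decomposable_def by blast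
  have TP: "\<And>om E. E \<in> formula_den ar sem \<Longrightarrow> r \<in> mod_set ar sem (T1 ar) om E \<Longrightarrow>
      r' \<in> mod_set ar sem (T1 ar) om E" using tp unfolding tt_pre_def by blast
  have wmu': "wft ar UNIV (mu r')" using mu_wft[OF wr'] .
  define g :: "('l, unit) tree \<Rightarrow> ('l, unit) tree" where "g = restr {}"
  have T1w: "\<And>t. t \<in> T1 ar \<longleftrightarrow> wft ar UNIV t" by (simp add: T1_def)
  have gT1: "\<forall>x\<in>T1 ar. g x \<in> T1 ar" unfolding g_def by (auto simp: T1_def intro: restr_wft)
  have pre: "\<And>oi'. (g -` mod_set ar sem UNIV oi' {()}) \<inter> T1 ar = mod_set ar sem UNIV oi' {} \<inter> T1 ar"
  proof (intro set_eqI iffI)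
    fix oi' x assume "x \<in> (g -` mod_set ar sem UNIV oi' {()}) \<inter> T1 ar"
    then show "x \<in> mod_set ar sem UNIV oi' {} \<inter> T1 ar"
      unfolding g_def mod_set_def by (simp add: restr_restr_empty T1_def)
  next
    fix oi' x assume a: "x \<in> mod_set ar sem UNIV oi' {} \<inter> T1 ar"
    then have "wft ar UNIV (restr {} x)" using restr_wft[of ar UNIV x "{}"] by (simp add: mod_set_def)
    with a show "x \<in> (g -` mod_set ar sem UNIV oi' {()}) \<inter> T1 ar"
      unfolding g_def mod_set_def by (simp add: restr_restr_empty)
  qed
  have key: "\<And>q oi oi'. wft ar (T1 ar) q \<Longrightarrow>
     map_tree id g q \<in> mod_set ar sem (T1 ar) oi (mod_set ar sem UNIV oi' {()})
     \<longleftrightarrow> q \<in> mod_set ar sem (T1 ar) oi (mod_set ar sem UNIV oi' {})"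
  proof -
    fix q oi oi' assume wq: "wft ar (T1 ar) q"
    have "restr (mod_set ar sem UNIV oi' {()}) (map_tree id g q)
        = restr (g -` mod_set ar sem UNIV oi' {()}) q" by (rule restr_map)
    also have "\<dots> = restr (mod_set ar sem UNIV oi' {}) q"
      by (rule restr_cong[OF wq pre])
    finally show "?thesis q oi oi'"
      using wq map_wft[OF wq gT1] unfolding mod_set_def by auto
  qed
  have mug: "\<And>q. mu (map_tree id g q) = restr {} (mu q)" unfolding g_def by (rule mu_map)
  from D have "mu r \<in> D \<longrightarrow> mu r' \<in> D"
  proof (induction rule: formula_den.induct)
    case (fd_top om)
    show ?case
    proof
      assume "mu r \<in> mod_set ar sem UNIV om {()}"
      from SD[OF wr this] obtain C where
        C1: "\<forall>(oi, oi') \<in> C. r \<in> mod_set ar sem (T1 ar) oi (mod_set ar sem UNIV oi' {()})" and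
        C2: "\<forall>r'. wft ar (T1 ar) r' \<longrightarrow>
              (\<forall>(oi, oi') \<in> C. r' \<in> mod_set ar sem (T1 ar) oi (mod_set ar sem UNIV oi' {()}))
              \<longrightarrow> mu r' \<in> mod_set ar sem UNIV om {()}" by blast
      have "\<forall>(oi, oi') \<in> C. r' \<in> mod_set ar sem (T1 ar) oi (mod_set ar sem UNIV oi' {()})"
      proof (intro ballI, clarify)
        fix oi oi' assume c: "(oi, oi') \<in> C"
        from C1 c have "r \<in> mod_set ar sem (T1 ar) oi (mod_set ar sem UNIV oi' {()})" by auto
        then show "r' \<in> mod_set ar sem (T1 ar) oi (mod_set ar sem UNIV oi' {()})"
          by (rule TP[OF formula_den.fd_top])
      qed
      then show "mu r' \<in> mod_set ar sem UNIV om {()}" using C2 wr' by blast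
    qed
  next
    case (fd_bot om)
    show ?case
    proof
      assume a: "mu r \<in> mod_set ar sem UNIV om {}"
      have wg: "wft ar (T1 ar) (map_tree id g r)" by (rule map_wft[OF wr gT1])
      have wg': "wft ar (T1 ar) (map_tree id g r')" by (rule map_wft[OF wr' gT1])
      have "mu (map_tree id g r) \<in> mod_set ar sem UNIV om {()}"
        using a mu_wft[OF wg] unfolding mug mod_set_def by (simp add: restr_restr_empty)
      from SD[OF wg this] obtain C where
        C1: "\<forall>(oi, oi') \<in> C. map_tree id g r \<in> mod_set ar sem (T1 ar) oi (mod_set ar sem UNIV oi' {()})" and
        C2: "\<forall>r'. wft ar (T1 ar) r' \<longrightarrow>
              (\<forall>(oi, oi') \<in> C. r' \<in> mod_set ar sem (T1 ar) oi (mod_set ar sem UNIV oi' {()}))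
              \<longrightarrow> mu r' \<in> mod_set ar sem UNIV om {()}" by blast
      have "\<forall>(oi, oi') \<in> C. map_tree id g r' \<in> mod_set ar sem (T1 ar) oi (mod_set ar sem UNIV oi' {()})"
      proof (intro ballI, clarify)
        fix oi oi' assume "(oi, oi') \<in> C"
        with C1 have "map_tree id g r \<in> mod_set ar sem (T1 ar) oi (mod_set ar sem UNIV oi' {()})"
          by auto
        then have "r \<in> mod_set ar sem (T1 ar) oi (mod_set ar sem UNIV oi' {})"
          by (rule key[OF wr, THEN iffD1])
        then have "r' \<in> mod_set ar sem (T1 ar) oi (mod_set ar sem UNIV oi' {})"
          by (rule TP[OF formula_den.fd_bot])
        then show "map_tree id g r' \<in> mod_set ar sem (T1 ar) oi (mod_set ar sem UNIV oi' {()})"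
          by (rule key[OF wr', THEN iffD2])
      qed
      then have "mu (map_tree id g r') \<in> mod_set ar sem UNIV om {()}" using C2 wg' by blast
      then show "mu r' \<in> mod_set ar sem UNIV om {}"
        using wmu' unfolding mug mod_set_def by (simp add: restr_restr_empty)
    qed
  next
    case (fd_Sup S)
    then show ?case by auto
  next
    case (fd_Inf S)
    then show ?case using wmu' by (auto simp: T1_def)
  qed
  with muD show "mu r' \<in> D" by blast
qed

end
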